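(* Let $0\le\alpha\le\tfrac12$, let $X$ be uniformly distributed on $\{-1,1\}^n$, and let $Y_i=X_iZ_i$ for $i=1,\dots,n$, where $Z_1,\dots,Z_n$ are i.i.d., independent of $X$, with $\Pr(Z_i=-1)=\alpha$, $\Pr(Z_i=1)=1-\alpha$. For any balanced Boolean function $f:\{-1,1\}^n\to\{-1,1\}$ (i.e., $\Pr(f(X)=-1)=\tfrac12$), any integer $t\ge1$, and any $\alpha$ with $\tfrac12\left(1-\tfrac{1}{\sqrt{2t-1}}\right)\le\alpha\le\tfrac12$, \[ I(f(X);Y)\le \sum_{k=1}^{t-1}\frac{\log(e)}{2k(2k-1)}(2k-1)^{k}(1-2\alpha)^{2k}+\left(1-\sum_{k=1}^{t-1}\frac{\log(e)}{2k(2k-1)}\right)(2t-1)^{t}(1-2\alpha)^{2t}. \]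
   Context: $I(\cdot;\cdot)$ denotes mutual information; all logarithms are to base $2$. *)

theory Defs
  imports Complex_Main
begin

definition cube :: "nat \<Rightarrow> int list set" where
  "cube n = {xs. length xs = n \<and> set xs \<subseteq> {-1, 1}}"

text \<open>Joint pmf of (X,Y): X uniform on the cube, Y_i = X_i Z_i with
  Pr(Z_i = -1) = alpha, Pr(Z_i = 1) = 1 - alpha, all independent.\<close>
definition pXY :: "real \<Rightarrow> nat \<Rightarrow> int list \<Rightarrow> int list \<Rightarrow> real" where
  "pXY \<alpha> n x y = (1 / 2 ^ n) * (\<Prod>i<n. if x ! i = y ! i then 1 - \<alpha> else \<alpha>)"

definition pFY :: "real \<Rightarrow> nat \<Rightarrow> (int list \<Rightarrow> int) \<Rightarrow> int \<Rightarrow> int list \<Rightarrow> real" where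
  "pFY \<alpha> n f b y = (\<Sum>x\<in>{x\<in>cube n. f x = b}. pXY \<alpha> n x y)"

definition pF :: "real \<Rightarrow> nat \<Rightarrow> (int list \<Rightarrow> int) \<Rightarrow> int \<Rightarrow> real" where
  "pF \<alpha> n f b = (\<Sum>y\<in>cube n. pFY \<alpha> n f b y)"

definition pY :: "real \<Rightarrow> nat \<Rightarrow> (int list \<Rightarrow> int) \<Rightarrow> int list \<Rightarrow> real" where
  "pY \<alpha> n f y = (\<Sum>b\<in>{-1, 1}. pFY \<alpha> n f b y)"

definition MI_fY :: "real \<Rightarrow> nat \<Rightarrow> (int list \<Rightarrow> int) \<Rightarrow> real" where
  "MI_fY \<alpha> n f = (\<Sum>b\<in>{-1, 1}. \<Sum>y\<in>cube n.
      (if pFY \<alpha> n f b y = 0 then 0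
       else pFY \<alpha> n f b y * log 2 (pFY \<alpha> n f b y / (pF \<alpha> n f b * pY \<alpha> n f y))))"

end

theory Submission imports Defs "HOL-Analysis.Analysis" begin


lemma cube_0: "cube 0 = {[]}"
  by (auto simp: cube_def)

lemma cube_Suc: "cube (Suc n) = Cons 1 ` cube n \<union> Cons (-1) ` cube n"
proof
  show "cube (Suc n) \<subseteq> Cons 1 ` cube n \<union> Cons (-1) ` cube n"
  proof
    fix x assume "x \<in> cube (Suc n)"
    then obtain a xs where x: "x = a # xs" "length xs = n" "a \<in> {-1,1}" "set xs \<subseteq> {-1,1}"
      unfolding cube_def by (cases x) auto
    then show "x \<in> Cons 1 ` cube n \<union> Cons (-1) ` cube n" by (auto simp: cube_def)
  qed
qed (auto simp: cube_def)

lemma finite_cube: "finite (cube n)"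
  by (induction n) (auto simp: cube_0 cube_Suc)

lemma sum_cube_Suc:
  "(\<Sum>x\<in>cube (Suc n). h x) = (\<Sum>xs\<in>cube n. h (1 # xs) + h ((-1) # xs))"
proof -
  have d: "Cons 1 ` cube n \<inter> Cons (-1) ` cube n = {}" by auto
  have "(\<Sum>x\<in>cube (Suc n). h x) = (\<Sum>x\<in>Cons 1 ` cube n. h x) + (\<Sum>x\<in>Cons (-1) ` cube n. h x)"
    unfolding cube_Suc by (rule sum.union_disjoint) (auto simp: finite_cube)
  also have "\<dots> = (\<Sum>xs\<in>cube n. h (1 # xs)) + (\<Sum>xs\<in>cube n. h ((-1) # xs))"
    by (simp add: sum.reindex)
  finally show ?thesis by (simp add: sum.distrib)
qed

lemma card_cube: "card (cube n) = 2 ^ n"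
proof (induction n)
  case 0 then show ?case by (simp add: cube_0)
next
  case (Suc n)
  have "card (cube (Suc n)) = (\<Sum>x\<in>cube (Suc n). 1)" by simp
  also have "\<dots> = 2 * card (cube n)" unfolding sum_cube_Suc by simp
  finally show ?case using Suc by simp
qed

fun kern :: "real \<Rightarrow> int list \<Rightarrow> int list \<Rightarrow> real" where
  "kern r (a # xs) (b # ys) = (1 + r * of_int a * of_int b) / 2 * kern r xs ys"
| "kern r _ _ = 1"

lemma kern_nonneg: "0 \<le> r \<Longrightarrow> r \<le> 1 \<Longrightarrow> set x \<subseteq> {-1,1} \<Longrightarrow> set y \<subseteq> {-1,1} \<Longrightarrow> 0 \<le> kern r x y"
proof (induction r x y rule: kern.induct)
  case (1 r a xs b ys)
  have "0 \<le> 1 + r * of_int a * of_int b" using 1 by auto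
  then show ?case using 1 by simp
qed auto

lemma sum_kern2: "length x = n \<Longrightarrow> (\<Sum>y\<in>cube n. kern r x y) = 1"
proof (induction n arbitrary: x)
  case 0 then show ?case by (simp add: cube_0)
next
  case (Suc n)
  then obtain a xs where x: "x = a # xs" "length xs = n" by (cases x) auto
  show ?case unfolding sum_cube_Suc x using Suc.IH[OF x(2)]
    by (simp add: field_simps flip: sum_distrib_left sum.distrib)
qed

lemma sum_kern1: "length y = n \<Longrightarrow> (\<Sum>x\<in>cube n. kern r x y) = 1"
proof (induction n arbitrary: y)
  case 0 then show ?case by (simp add: cube_0)
next
  case (Suc n)
  then obtain a ys where y: "y = a # ys" "length ys = n" by (cases y) auto
  show ?case unfolding sum_cube_Suc y using Suc.IH[OF y(2)]
    by (simp add: field_simps flip: sum_distrib_left sum.distrib)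
qed

lemma prod_kern: "x \<in> cube n \<Longrightarrow> y \<in> cube n \<Longrightarrow>
   (\<Prod>i<n. if x ! i = y ! i then 1 - \<alpha> else \<alpha>) = kern (1 - 2 * \<alpha>) x y"
proof (induction n arbitrary: x y)
  case 0 then show ?case by (simp add: cube_0)
next
  case (Suc n)
  then obtain a xs b ys where x: "x = a # xs" "y = b # ys" "xs \<in> cube n" "ys \<in> cube n"
    "a \<in> {-1,1}" "b \<in> {-1,1}"
    by (auto simp: cube_Suc)
  have "(\<Prod>i<Suc n. if x ! i = y ! i then 1 - \<alpha> else \<alpha>) =
     (if a = b then 1 - \<alpha> else \<alpha>) * (\<Prod>i<n. if xs ! i = ys ! i then 1 - \<alpha> else \<alpha>)"
    unfolding prod.lessThan_Suc_shift x by simp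
  also have "\<dots> = (if a = b then 1 - \<alpha> else \<alpha>) * kern (1 - 2 * \<alpha>) xs ys"
    using Suc.IH x by simp
  also have "\<dots> = kern (1 - 2 * \<alpha>) x y" using x(5,6) unfolding x by (auto simp: field_simps)
  finally show ?case .
qed



lemma binom_ineq: "j \<le> k \<Longrightarrow> (2*k choose (2*j)) \<le> (k choose j) * (2*k-1)^j"
proof (induction j)
  case 0 then show ?case by simp
next
  case (Suc j)
  let ?D = "2*k choose (2*j)" and ?E = "(k choose j) * (2*k-1)^j"
  have IH: "?D \<le> ?E" using Suc by simp
  have i1: "(2*k choose Suc (2*j)) * Suc (2*j) = ?D * (2*k - 2*j)"
    using binomial_absorb_comp[of "2*k" "2*j"] binomial_absorption[of "2*j" "2*k"] by (simp add: mult.commute)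
  have i2: "(2*k choose Suc (Suc (2*j))) * Suc (Suc (2*j)) = (2*k choose Suc (2*j)) * (2*k - 2*j - 1)"
    using binomial_absorb_comp[of "2*k" "Suc (2*j)"] binomial_absorption[of "Suc (2*j)" "2*k"] by (simp add: mult.commute)
  have i3: "(k choose Suc j) * Suc j = (k choose j) * (k - j)"
    using binomial_absorb_comp[of "k" "j"] binomial_absorption[of "j" "k"] by (simp add: mult.commute)
  have L: "(2*k choose (2*Suc j)) * ((2*j+1)*(2*j+2)) = ?D * ((2*k - 2*j) * (2*k - 2*j - 1))"
  proof -
    have "(2*k choose (2*Suc j)) * ((2*j+1)*(2*j+2)) = ((2*k choose Suc (Suc (2*j))) * Suc (Suc (2*j))) * Suc (2*j)"
      by (simp add: algebra_simps)
    also have "\<dots> = ((2*k choose Suc (2*j)) * Suc (2*j)) * (2*k - 2*j - 1)"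
      unfolding i2 by (metis mult.commute mult.assoc)
    also have "\<dots> = ?D * ((2*k - 2*j) * (2*k - 2*j - 1))"
      unfolding i1 by (metis mult.assoc)
    finally show ?thesis .
  qed
  have R: "((k choose Suc j) * (2*k-1)^Suc j) * ((2*j+1)*(2*j+2)) = ?E * (2*(k-j)*((2*j+1)*(2*k-1)))"
  proof -
    have "((k choose Suc j) * (2*k-1)^Suc j) * ((2*j+1)*(2*j+2)) = ((k choose Suc j) * Suc j) * (2*(2*j+1)*(2*k-1)^Suc j)"
      by (simp add: algebra_simps)
    also have "\<dots> = ?E * (2*(k-j)*((2*j+1)*(2*k-1)))" unfolding i3 by (simp add: algebra_simps)
    finally show ?thesis .
  qed
  have m: "(2*k - 2*j) * (2*k - 2*j - 1) \<le> 2*(k-j)*((2*j+1)*(2*k-1))"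
  proof -
    have e: "2*k - 2*j = 2*(k-j)" by simp
    have le: "2*k - 2*j - 1 \<le> (2*j+1)*(2*k-1)"
    proof -
      have "2*k - 2*j - 1 \<le> 1*(2*k-1)" by simp
      also have "\<dots> \<le> (2*j+1)*(2*k-1)" by (rule mult_le_mono1) simp
      finally show ?thesis .
    qed
    have "(2*k - 2*j) * (2*k - 2*j - 1) = 2*(k-j) * (2*k - 2*j - 1)" by (simp only: e)
    also have "\<dots> \<le> 2*(k-j)*((2*j+1)*(2*k-1))" using le by (rule mult_le_mono2)
    finally show ?thesis .
  qed
  have "?D * ((2*k - 2*j) * (2*k - 2*j - 1)) \<le> ?E * (2*(k-j)*((2*j+1)*(2*k-1)))"
    using IH m by (rule mult_le_mono)
  then have "(2*k choose (2*Suc j)) * ((2*j+1)*(2*j+2)) \<le> ((k choose Suc j) * (2*k-1)^Suc j) * ((2*j+1)*(2*j+2))"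
    using L R by simp
  then show ?case by (simp only: mult_le_cancel2) simp
qed

lemma sum_even_odd: "(k::nat) = k \<Longrightarrow> (\<Sum>i\<le>2*k. h i) = (\<Sum>j\<le>k. h (2*j)) + (\<Sum>j<k. h (2*j+1))"
  by (induction k) (simp_all add: algebra_simps)

lemma twopoint:
  fixes a d :: real
  shows "(a + d)^(2*k) + (a - d)^(2*k) \<le> 2 * (a^2 + real (2*k-1) * d^2)^k"
proof -
  have "(a + d)^(2*k) + (a - d)^(2*k) = (\<Sum>i\<le>2*k. real (2*k choose i) * (d^i + (-d)^i) * a^(2*k-i))"
    using binomial_ring[of d a "2*k"] binomial_ring[of "-d" a "2*k"]
    by (simp add: algebra_simps sum.distrib)
  also have "\<dots> = (\<Sum>j\<le>k. real (2*k choose (2*j)) * (2 * d^(2*j)) * a^(2*k-2*j))"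
    unfolding sum_even_odd[OF refl] by simp
  also have "\<dots> \<le> (\<Sum>j\<le>k. real (k choose j) * (real (2*k-1)^j * (2 * d^(2*j))) * a^(2*k-2*j))"
  proof (rule sum_mono)
    fix j assume "j \<in> {..k}"
    then have "real (2*k choose (2*j)) \<le> real (k choose j) * real (2*k-1)^j"
      using binom_ineq[of j k] by (metis atMost_iff of_nat_le_iff of_nat_mult of_nat_power)
    moreover have "0 \<le> 2 * d^(2*j) * a^(2*k-2*j)"
    proof -
      have "2*k-2*j = 2*(k-j)" by simp
      then show ?thesis by (simp add: power_mult)
    qed
    ultimately show "real (2*k choose (2*j)) * (2 * d^(2*j)) * a^(2*k-2*j) \<le> real (k choose j) * (real (2*k-1)^j * (2 * d^(2*j))) * a^(2*k-2*j)"
      using mult_right_mono[of "real (2*k choose (2*j))" "real (k choose j) * real (2*k-1)^j" "2 * d^(2*j) * a^(2*k-2*j)"]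
      by (simp add: algebra_simps)
  qed
  also have "\<dots> = 2 * (\<Sum>j\<le>k. real (k choose j) * (real (2*k-1) * d^2)^j * (a^2)^(k-j))"
    by (simp add: sum_distrib_left algebra_simps power_mult_distrib flip: power_mult)
  also have "\<dots> = 2 * (a^2 + real (2*k-1) * d^2)^k"
    using binomial_ring[of "real (2*k-1) * d^2" "a^2" k] by (simp add: add.commute)
  finally show ?thesis .
qed



lemma cvx_pow:
  fixes x y t :: real
  assumes "0 \<le> x" "0 \<le> y" "0 \<le> t" "t \<le> 1"
  shows "((1-t)*x + t*y)^k \<le> (1-t)*x^k + t*y^k"
proof -
  have c: "convex_on {0..} (\<lambda>x::real. x^k)"
  proof (cases "even k")
    case True then show ?thesis using convex_power_even convex_on_subset by blast
  next
    case False then show ?thesis using convex_power_odd by blast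
  qed
  show ?thesis using convex_onD[OF c, of t x y] assms by simp
qed

lemma mink:
  fixes u v :: "'a \<Rightarrow> real"
  assumes I: "finite I" and N: "N > 0" and k: "k \<ge> 1"
    and uv: "\<And>i. i \<in> I \<Longrightarrow> 0 \<le> u i \<and> 0 \<le> v i"
    and AB: "0 \<le> A" "0 \<le> B"
    and hu: "(\<Sum>i\<in>I. u i ^ k) \<le> N * A^k" and hv: "(\<Sum>i\<in>I. v i ^ k) \<le> N * B^k"
  shows "(\<Sum>i\<in>I. (u i + v i)^k) \<le> N * (A + B)^k"
proof -
  have zero: "w i = 0" if "(\<Sum>i\<in>I. w i ^ k) \<le> 0" "\<And>i. i \<in> I \<Longrightarrow> 0 \<le> w i" "i \<in> I" for w :: "'a \<Rightarrow> real" and i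
  proof -
    have "(\<Sum>i\<in>I. w i ^ k) = 0" using that(1) sum_nonneg[of I "\<lambda>i. w i ^ k"] that(2) by force
    then have "w i ^ k = 0" using sum_nonneg_eq_0_iff[OF I, of "\<lambda>i. w i ^ k"] that by auto
    then show ?thesis by simp
  qed
  show ?thesis
  proof (cases "A = 0")
    case True
    then have "\<And>i. i \<in> I \<Longrightarrow> u i = 0" using zero[of u] hu uv k by (simp add: power_0_left)
    then show ?thesis using hv True by simp
  next
    case A0: False
    show ?thesis
    proof (cases "B = 0")
      case True
      then have "\<And>i. i \<in> I \<Longrightarrow> v i = 0" using zero[of v] hv uv k by (simp add: power_0_left)
      then show ?thesis using hu True by simp
    next
      case B0: False
      have A: "A > 0" and B: "B > 0" using AB A0 B0 by auto
      define t where "t = B / (A + B)"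
      have t: "0 \<le> t" "t \<le> 1" "1 - t = A / (A+B)" using A B by (auto simp: t_def field_simps)
      have pt: "(u i + v i)^k \<le> (A+B)^k * ((1-t) * (u i / A)^k + t * (v i / B)^k)" if "i \<in> I" for i
      proof -
        have "u i + v i = (A+B) * ((1-t) * (u i / A) + t * (v i / B))"
        proof -
          have S: "A + B > 0" using A B by simp
          have e1: "(A/(A+B))*(u i/A) = u i/(A+B)" using A by simp
          have e2: "(B/(A+B))*(v i/B) = v i/(A+B)" using B by simp
          have "(A+B) * (u i/(A+B) + v i/(A+B)) = u i + v i" using S
            by (simp add: add_divide_distrib[symmetric])
          then show ?thesis unfolding t(3) unfolding t_def e1 e2 by simp
        qed
        then have "(u i + v i)^k = (A+B)^k * ((1-t) * (u i / A) + t * (v i / B))^k"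
          by (simp add: power_mult_distrib)
        also have "\<dots> \<le> (A+B)^k * ((1-t) * (u i / A)^k + t * (v i / B)^k)"
          using cvx_pow[of "u i / A" "v i / B" t k] uv[OF that] A B t
          by (intro mult_left_mono) auto
        finally show ?thesis .
      qed
      have "(\<Sum>i\<in>I. (u i + v i)^k) \<le> (\<Sum>i\<in>I. (A+B)^k * ((1-t) * (u i / A)^k + t * (v i / B)^k))"
        using pt by (rule sum_mono)
      also have "\<dots> = (A+B)^k * ((1-t) * ((\<Sum>i\<in>I. u i ^ k) / A^k) + t * ((\<Sum>i\<in>I. v i ^ k) / B^k))"
        by (simp add: sum_distrib_left[symmetric] sum.distrib power_divide sum_divide_distrib sum_distrib_left times_divide_eq_right)
      also have "\<dots> \<le> (A+B)^k * ((1-t) * N + t * N)"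
      proof -
        have "(\<Sum>i\<in>I. u i ^ k) / A^k \<le> N" using hu A by (simp add: divide_le_eq mult.commute)
        moreover have "(\<Sum>i\<in>I. v i ^ k) / B^k \<le> N" using hv B by (simp add: divide_le_eq mult.commute)
        ultimately show ?thesis using t A B
          by (intro mult_left_mono add_mono mult_left_mono) auto
      qed
      also have "\<dots> = N * (A+B)^k" by (simp add: algebra_simps)
      finally show ?thesis .
    qed
  qed
qed

definition Tf :: "real \<Rightarrow> nat \<Rightarrow> (int list \<Rightarrow> real) \<Rightarrow> int list \<Rightarrow> real" where
  "Tf r n f y = (\<Sum>x\<in>cube n. kern r x y * f x)"

lemma Tf_Suc: "Tf r (Suc n) f (b # ys) =
   Tf r n (\<lambda>xs. (f (1#xs) + f ((-1)#xs)) / 2) ys + r * of_int b * Tf r n (\<lambda>xs. (f (1#xs) - f ((-1)#xs)) / 2) ys"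
proof -
  have "Tf r (Suc n) f (b # ys) = (\<Sum>xs\<in>cube n. kern r xs ys * ((f (1#xs) + f ((-1)#xs)) / 2)
      + r * of_int b * (kern r xs ys * ((f (1#xs) - f ((-1)#xs)) / 2)))"
    unfolding Tf_def sum_cube_Suc by (intro sum.cong) (simp_all add: field_simps)
  then show ?thesis unfolding Tf_def by (simp add: sum.distrib sum_distrib_left)
qed

lemma var_nonneg:
  fixes f :: "'a \<Rightarrow> real"
  assumes "finite I" "card I > 0"
  shows "((\<Sum>i\<in>I. f i) / card I)^2 \<le> (\<Sum>i\<in>I. (f i)^2) / card I"
proof -
  have "(\<Sum>i\<in>I. f i * 1)^2 \<le> (\<Sum>i\<in>I. (f i)^2) * (\<Sum>i\<in>I. 1^2)"
    by (rule Cauchy_Schwarz_ineq_sum)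
  then have "(\<Sum>i\<in>I. f i)^2 \<le> (\<Sum>i\<in>I. (f i)^2) * card I" by simp
  then show ?thesis using assms by (simp add: power_divide field_simps power2_eq_square)
qed



definition Mn :: "nat \<Rightarrow> (int list \<Rightarrow> real) \<Rightarrow> real" where
  "Mn n f = (\<Sum>x\<in>cube n. f x) / 2^n"
definition Sn :: "nat \<Rightarrow> (int list \<Rightarrow> real) \<Rightarrow> real" where
  "Sn n f = (\<Sum>x\<in>cube n. (f x)^2) / 2^n"

lemma var_cube: "(Mn n f)^2 \<le> Sn n f"
  using var_nonneg[OF finite_cube, of n f] unfolding Mn_def Sn_def card_cube by simp

lemma hc:
  fixes r c :: real and k :: nat
  assumes k: "k \<ge> 1" and c: "c = real (2*k-1) * r^2" "c \<le> 1"
  shows "(\<Sum>y\<in>cube n. (Tf r n f y)^(2*k)) \<le> 2^n * ((Mn n f)^2 + c * (Sn n f - (Mn n f)^2))^k"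
proof (induction n arbitrary: f)
  case 0
  show ?case by (simp add: cube_0 Tf_def Mn_def Sn_def power_mult)
next
  case (Suc n)
  have c0: "0 \<le> c" using c by simp
  define f0 where "f0 = (\<lambda>xs. (f (1#xs) + f ((-1)#xs)) / 2)"
  define f1 where "f1 = (\<lambda>xs. (f (1#xs) - f ((-1)#xs)) / 2)"
  define a where "a = Tf r n f0"
  define b where "b = Tf r n f1"
  define A where "A = (Mn n f0)^2 + c * (Sn n f0 - (Mn n f0)^2)"
  define B1 where "B1 = (Mn n f1)^2 + c * (Sn n f1 - (Mn n f1)^2)"
  have A0: "0 \<le> A" unfolding A_def using var_cube[of n f0] c0 by simp
  have B0: "0 \<le> B1" unfolding B1_def using var_cube[of n f1] c0 by simp
  have "(\<Sum>y\<in>cube (Suc n). (Tf r (Suc n) f y)^(2*k))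
      = (\<Sum>ys\<in>cube n. (a ys + r * b ys)^(2*k) + (a ys - r * b ys)^(2*k))"
    unfolding sum_cube_Suc Tf_Suc a_def b_def f0_def f1_def by simp
  also have "\<dots> \<le> (\<Sum>ys\<in>cube n. 2 * ((a ys)^2 + c * (b ys)^2)^k)"
  proof (rule sum_mono)
    fix ys
    show "(a ys + r * b ys)^(2*k) + (a ys - r * b ys)^(2*k) \<le> 2 * ((a ys)^2 + c * (b ys)^2)^k"
      using twopoint[of "a ys" "r * b ys" k] unfolding c by (simp add: power_mult_distrib algebra_simps)
  qed
  also have "\<dots> = 2 * (\<Sum>ys\<in>cube n. ((a ys)^2 + c * (b ys)^2)^k)" by (simp add: sum_distrib_left)
  also have "\<dots> \<le> 2 * (2^n * (A + c * B1)^k)"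
  proof -
    have hu: "(\<Sum>ys\<in>cube n. ((a ys)^2)^k) \<le> 2^n * A^k"
      using Suc.IH[of f0] unfolding a_def A_def by (simp add: power_mult)
    have "(\<Sum>ys\<in>cube n. (c * (b ys)^2)^k) = c^k * (\<Sum>ys\<in>cube n. (b ys)^(2*k))"
      by (simp add: power_mult_distrib sum_distrib_left power_mult)
    also have "\<dots> \<le> c^k * (2^n * B1^k)"
      using Suc.IH[of f1] c0 unfolding b_def B1_def by (intro mult_left_mono) simp_all
    finally have hv: "(\<Sum>ys\<in>cube n. (c * (b ys)^2)^k) \<le> 2^n * (c * B1)^k"
      by (simp add: power_mult_distrib algebra_simps)
    show ?thesis
      using mink[OF finite_cube, where N="2^n" and k=k and u="\<lambda>ys. (a ys)^2" and v="\<lambda>ys. c * (b ys)^2" and A=A and B="c * B1"] hu hv A0 B0 c0 k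
      by simp
  qed
  also have "\<dots> \<le> 2^Suc n * ((Mn (Suc n) f)^2 + c * (Sn (Suc n) f - (Mn (Suc n) f)^2))^k"
  proof -
    have M: "Mn (Suc n) f = Mn n f0"
      unfolding Mn_def sum_cube_Suc f0_def by (simp add: sum_divide_distrib[symmetric] field_simps)
    have S: "Sn (Suc n) f = Sn n f0 + Sn n f1"
    proof -
      have pt: "f (1#xs)^2 + f ((-1)#xs)^2 = 2*((f0 xs)^2 + (f1 xs)^2)" for xs
        by (simp add: f0_def f1_def power2_eq_square field_simps)
      have "Sn (Suc n) f = (2 * (\<Sum>xs\<in>cube n. (f0 xs)^2 + (f1 xs)^2)) / 2^Suc n"
        unfolding Sn_def sum_cube_Suc pt by (simp add: sum_distrib_left)
      then have "Sn (Suc n) f = (\<Sum>xs\<in>cube n. (f0 xs)^2 + (f1 xs)^2) / 2^n" by simp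
      then show ?thesis unfolding Sn_def by (simp add: sum.distrib add_divide_distrib)
    qed
    have key: "A + c * B1 \<le> (Mn (Suc n) f)^2 + c * (Sn (Suc n) f - (Mn (Suc n) f)^2)"
    proof -
      have "0 \<le> c * (1 - c) * (Sn n f1 - (Mn n f1)^2)"
        using c0 c var_cube[of n f1] by simp
      then show ?thesis unfolding M S A_def B1_def by (simp add: algebra_simps)
    qed
    have "(A + c * B1)^k \<le> ((Mn (Suc n) f)^2 + c * (Sn (Suc n) f - (Mn (Suc n) f)^2))^k"
      using key A0 B0 c0 by (intro power_mono) simp_all
    then show ?thesis by simp
  qed
  finally show ?case .
qed



definition FF :: "real \<Rightarrow> real" where
  "FF g = (1+g)*ln(1+g) + (1-g)*ln(1-g)"

definition beta :: "nat \<Rightarrow> real" where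
  "beta m = 1 / ((real m + 1) * (2 * real m + 1))"

lemma beta_nonneg: "0 \<le> beta m" by (simp add: beta_def)

lemma beta_sums: "beta sums (2 * ln 2)"
proof -
  have "(\<lambda>k. 2 * (inverse (real_of_nat (2*k+1)) - inverse (real_of_nat (2*k+2)))) sums (2 * ln 2)"
    using sums_mult[OF alternating_harmonic_series_sums', of 2] by simp
  moreover have "(\<lambda>k. 2 * (inverse (real_of_nat (2*k+1)) - inverse (real_of_nat (2*k+2)))) = beta"
  proof (rule ext)
    fix k
    have a: "real_of_nat (2*k+1) = 2*real k + 1" "real_of_nat (2*k+2) = 2*(real k+1)" by simp_all
    have "inverse (real_of_nat (2*k+1)) - inverse (real_of_nat (2*k+2)) = 1/(2*real k + 1) - 1/(2*(real k+1))"
      unfolding a by (simp add: inverse_eq_divide)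
    also have "\<dots> = (1*(2*(real k+1)) - 1*(2*real k + 1)) / ((2*real k + 1)*(2*(real k+1)))"
      by (rule diff_frac_eq) (simp_all add: add_pos_pos)
    also have "\<dots> = beta k / 2"
    proof -
      have e: "(2*real k + 1)*(2*(real k+1)) = 2*((real k + 1) * (2 * real k + 1))" by (simp add: algebra_simps)
      have "1*(2*(real k+1)) - 1*(2*real k + 1) = 1" by simp
      then show ?thesis unfolding e beta_def by simp
    qed
    finally show "2 * (inverse (real_of_nat (2*k+1)) - inverse (real_of_nat (2*k+2))) = beta k" by simp
  qed
  ultimately show ?thesis by simp
qed

lemma FF_sums:
  assumes g: "\<bar>g\<bar> < 1"
  shows "(\<lambda>m. beta m * (g^2)^(m+1)) sums FF g"
proof -
  have s1: "(\<lambda>n. - ((-g)^n) / of_nat n) sums ln (1 + g)" using ln_series'[OF g] .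
  have s2: "(\<lambda>n. - (g^n) / of_nat n) sums ln (1 - g)" using ln_series'[of "-g"] g by simp
  have g2: "\<bar>-(g^2)\<bar> < 1" using g by (simp add: abs_square_less_1)
  have s3: "(\<lambda>n. - ((g^2)^n) / of_nat n) sums ln (1 - g^2)" using ln_series'[OF g2] by simp
  have s3': "(\<lambda>m. - ((g^2)^Suc m) / of_nat (Suc m)) sums ln (1 - g^2)"
    using sums_Suc_iff[of "\<lambda>n. - ((g^2)^n) / of_nat n" "ln (1 - g^2)"] s3 by simp
  have s4: "(\<lambda>n. g * (- ((-g)^n) / of_nat n) - g * (- (g^n) / of_nat n)) sums (g * ln (1 + g) - g * ln (1 - g))"
    by (intro sums_diff sums_mult s1 s2)
  have s5: "(\<lambda>m. \<Sum>n\<in>{m*2..<m*2+2}. g * (- ((-g)^n) / of_nat n) - g * (- (g^n) / of_nat n)) sums (g * ln (1 + g) - g * ln (1 - g))"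
    using sums_group[OF s4, of 2] by simp
  have e5: "(\<Sum>n\<in>{m*2..<m*2+2}. g * (- ((-g)^n) / of_nat n) - g * (- (g^n) / of_nat n)) = 2 * g^(2*m+2) / (2 * real m + 1)" for m
  proof -
    have "{m*2..<m*2+2} = {2*m, 2*m+1}" by auto
    moreover have "g * (- ((-g)^(2*m)) / of_nat (2*m)) - g * (- (g^(2*m)) / of_nat (2*m)) = 0" by simp
    moreover have "g * (- ((-g)^(2*m+1)) / of_nat (2*m+1)) - g * (- (g^(2*m+1)) / of_nat (2*m+1)) = 2 * g^(2*m+2) / (2*real m + 1)"
    proof -
      have "g * g^(2*m+1) = g^(2*m+2)" by simp
      then show ?thesis by (simp add: diff_divide_distrib[symmetric] add_divide_distrib[symmetric] algebra_simps)
    qed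
    ultimately show ?thesis by simp
  qed
  have s6: "(\<lambda>m. 2 * g^(2*m+2) / (2 * real m + 1)) sums (g * ln (1 + g) - g * ln (1 - g))"
    using s5 unfolding e5 .
  have s7: "(\<lambda>m. - ((g^2)^Suc m) / of_nat (Suc m) + 2 * g^(2*m+2) / (2 * real m + 1)) sums (ln (1 - g^2) + (g * ln (1 + g) - g * ln (1 - g)))"
    by (intro sums_add s3' s6)
  have e7: "- ((g^2)^Suc m) / of_nat (Suc m) + 2 * g^(2*m+2) / (2 * real m + 1) = beta m * (g^2)^(m+1)" for m
  proof -
    have "2*m+2 = 2*Suc m" by simp
    then have x: "(g^2)^Suc m = g^(2*m+2)" by (simp only: power_mult)
    have "2/(2*real m+1) - 1/(real m + 1) = (2*(real m+1) - 1*(2*real m+1))/((2*real m+1)*(real m+1))"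
      by (rule diff_frac_eq) (simp_all add: add_pos_pos)
    also have "\<dots> = 1 / ((real m + 1) * (2 * real m + 1))" by (simp add: mult.commute)
    finally have "2/(2*real m+1) - 1/(real m + 1) = 1 / ((real m + 1) * (2 * real m + 1))" .
    moreover have "- (g^(2*m+2)) / of_nat (Suc m) + 2 * g^(2*m+2) / (2 * real m + 1) = (2/(2*real m+1) - 1/(real m + 1)) * g^(2*m+2)"
      by (simp add: algebra_simps add.commute)
    moreover have x': "(g^2)^(m+1) = g^(2*m+2)" using x by simp
    ultimately show ?thesis unfolding x x' beta_def by simp
  qed
  have e8: "ln (1 - g^2) + (g * ln (1 + g) - g * ln (1 - g)) = FF g"
  proof -
    have "1 - g^2 = (1+g)*(1-g)" by (simp add: algebra_simps power2_eq_square)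
    moreover have "0 < 1+g" "0 < 1-g" using g by auto
    ultimately have "ln (1 - g^2) = ln (1+g) + ln (1-g)" by (simp add: ln_mult)
    then show ?thesis unfolding FF_def by (simp add: algebra_simps)
  qed
  show ?thesis using s7 unfolding e7 e8 .
qed

lemma sum_beta_le: "(\<Sum>m<T. beta m) \<le> 2 * ln 2"
  using sum_le_suminf[OF sums_summable[OF beta_sums], of "{..<T}"] beta_nonneg sums_unique[OF beta_sums]
  by simp

lemma FF_bound0:
  assumes g: "\<bar>g\<bar> \<le> 1"
  shows "FF g \<le> (\<Sum>m<T. beta m * (g^2)^(m+1)) + (2 * ln 2 - (\<Sum>m<T. beta m)) * (g^2)^(T+1)"
proof (cases "\<bar>g\<bar> = 1")
  case True
  then have g2: "g^2 = 1" by (metis abs_of_nonneg abs_of_nonpos eq_neg_iff_add_eq_0 le_cases power2_minus power_one)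
  have "FF g = 2 * ln 2" using True unfolding FF_def by (cases "g \<ge> 0") auto
  then show ?thesis using g2 by (simp add: sum.distrib)
next
  case False
  then have g1: "\<bar>g\<bar> < 1" using g by simp
  let ?x = "g^2"
  have x: "0 \<le> ?x" "?x \<le> 1" using g by (auto simp: abs_square_le_1)
  let ?H = "\<lambda>n. (if n \<in> {..<T} then beta n * ?x^(n+1) - beta n * ?x^(T+1) else 0) + beta n * ?x^(T+1)"
  have Hs: "?H sums ((\<Sum>n\<in>{..<T}. beta n * ?x^(n+1) - beta n * ?x^(T+1)) + 2 * ln 2 * ?x^(T+1))"
    by (intro sums_add sums_If_finite_set sums_mult2 beta_sums) simp
  have le: "beta n * ?x^(n+1) \<le> ?H n" for n
  proof (cases "n < T")
    case False
    have "?x^(n+1) \<le> ?x^(T+1)" using x False by (intro power_decreasing) auto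
    then show ?thesis using False beta_nonneg[of n] by (simp add: mult_left_mono)
  qed simp
  have "FF g \<le> (\<Sum>n\<in>{..<T}. beta n * ?x^(n+1) - beta n * ?x^(T+1)) + 2 * ln 2 * ?x^(T+1)"
    by (rule sums_le[OF le FF_sums[OF g1] Hs])
  moreover have "(\<Sum>n\<in>{..<T}. beta n * ?x^(n+1) - beta n * ?x^(T+1)) = (\<Sum>n<T. beta n * ?x^(n+1)) - (\<Sum>n<T. beta n) * ?x^(T+1)"
    by (simp add: sum_subtractf sum_distrib_right)
  ultimately show ?thesis by (simp add: left_diff_distrib)
qed



lemma cube_set: "x \<in> cube n \<Longrightarrow> set x \<subseteq> {-1,1} \<and> length x = n"
  by (simp add: cube_def)

lemma sum_f_zero:
  assumes f: "\<forall>x\<in>cube n. f x \<in> {-1, 1}"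
    and card: "real (card {x\<in>cube n. f x = -1}) / 2 ^ n = 1/2"
  shows "(\<Sum>x\<in>cube n. real_of_int (f x)) = 0"
proof -
  let ?S = "{x\<in>cube n. f x = -1}"
  have sub: "?S \<subseteq> cube n" by auto
  have "(\<Sum>x\<in>cube n. real_of_int (f x)) = (\<Sum>x\<in>cube n - ?S. real_of_int (f x)) + (\<Sum>x\<in>?S. real_of_int (f x))"
    by (rule sum.subset_diff[OF sub finite_cube])
  also have "\<dots> = (\<Sum>x\<in>cube n - ?S. 1) + (\<Sum>x\<in>?S. -1)"
  proof -
    have "(\<Sum>x\<in>cube n - ?S. real_of_int (f x)) = (\<Sum>x\<in>cube n - ?S. 1)"
      using f by (intro sum.cong) auto
    moreover have "(\<Sum>x\<in>?S. real_of_int (f x)) = (\<Sum>x\<in>?S. -1)" by (intro sum.cong) auto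
    ultimately show ?thesis by simp
  qed
  also have "\<dots> = real (card (cube n - ?S)) - real (card ?S)" by simp
  also have "\<dots> = 0"
  proof -
    have "card (cube n - ?S) = card (cube n) - card ?S" by (rule card_Diff_subset) (auto intro: finite_subset[OF _ finite_cube])
    moreover have "card ?S \<le> card (cube n)" by (rule card_mono[OF finite_cube sub])
    ultimately have "real (card (cube n - ?S)) = 2^n - real (card ?S)" by (simp add: card_cube of_nat_diff)
    moreover have "real (card ?S) = 2^n / 2" using card by (simp add: field_simps)
    ultimately show ?thesis by simp
  qed
  finally show ?thesis .
qed

lemma pFY_eq:
  assumes f: "\<forall>x\<in>cube n. f x \<in> {-1, 1}" and y: "y \<in> cube n" and b: "b \<in> {-1,1}"
  shows "pFY \<alpha> n f b y = (1 + real_of_int b * Tf (1 - 2*\<alpha>) n (\<lambda>x. real_of_int (f x)) y) / (2 * 2^n)"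
proof -
  let ?r = "1 - 2*\<alpha>"
  have "pFY \<alpha> n f b y = (\<Sum>x\<in>cube n. if f x = b then kern ?r x y / 2^n else 0)"
    unfolding pFY_def using y
    by (simp add: sum.inter_filter[OF finite_cube] pXY_def prod_kern cong: if_cong)
  also have "\<dots> = (\<Sum>x\<in>cube n. (kern ?r x y + real_of_int b * (kern ?r x y * real_of_int (f x))) / (2 * 2^n))"
  proof (intro sum.cong refl)
    fix x assume "x \<in> cube n"
    then have "f x \<in> {-1,1}" using f by auto
    then show "(if f x = b then kern ?r x y / 2^n else 0) = (kern ?r x y + real_of_int b * (kern ?r x y * real_of_int (f x))) / (2 * 2^n)"
      using b by (auto simp: field_simps)
  qed
  also have "\<dots> = ((\<Sum>x\<in>cube n. kern ?r x y) + real_of_int b * Tf ?r n (\<lambda>x. real_of_int (f x)) y) / (2 * 2^n)"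
    unfolding Tf_def by (simp add: sum_divide_distrib[symmetric] sum.distrib sum_distrib_left)
  also have "\<dots> = (1 + real_of_int b * Tf ?r n (\<lambda>x. real_of_int (f x)) y) / (2 * 2^n)"
    using sum_kern1[of y n ?r] y by (simp add: cube_def)
  finally show ?thesis .
qed



lemma MI_eq:
  assumes f: "\<forall>x\<in>cube n. f x \<in> {-1, 1}"
    and card: "real (card {x\<in>cube n. f x = -1}) / 2 ^ n = 1/2"
  shows "MI_fY \<alpha> n f = (\<Sum>y\<in>cube n. FF (Tf (1 - 2*\<alpha>) n (\<lambda>x. real_of_int (f x)) y)) / (2^n * (2 * ln 2))"
proof -
  let ?r = "1 - 2*\<alpha>"
  let ?g = "Tf ?r n (\<lambda>x. real_of_int (f x))"
  let ?N = "(2::real)^n"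
  have sg: "(\<Sum>y\<in>cube n. ?g y) = 0"
  proof -
    have "(\<Sum>y\<in>cube n. ?g y) = (\<Sum>x\<in>cube n. real_of_int (f x) * (\<Sum>y\<in>cube n. kern ?r x y))"
      unfolding Tf_def by (subst sum.swap) (simp add: sum_distrib_left mult.commute)
    also have "\<dots> = (\<Sum>x\<in>cube n. real_of_int (f x))"
      by (intro sum.cong refl) (simp add: sum_kern2 cube_set)
    finally show ?thesis using sum_f_zero[OF f card] by simp
  qed
  have pF: "pF \<alpha> n f b = 1/2" if b: "b \<in> {-1,1}" for b
  proof -
    have "pF \<alpha> n f b = (\<Sum>y\<in>cube n. (1 + real_of_int b * ?g y) / (2 * ?N))"
      unfolding pF_def using pFY_eq[OF f _ b] by (intro sum.cong) auto
    also have "\<dots> = (real (card (cube n)) + real_of_int b * (\<Sum>y\<in>cube n. ?g y)) / (2 * ?N)"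
      by (simp add: sum_divide_distrib[symmetric] sum.distrib sum_distrib_left)
    also have "\<dots> = 1/2" using sg by (simp add: card_cube)
    finally show ?thesis .
  qed
  have pY: "pY \<alpha> n f y = 1 / ?N" if y: "y \<in> cube n" for y
  proof -
    have "pY \<alpha> n f y = pFY \<alpha> n f (-1) y + pFY \<alpha> n f 1 y" unfolding pY_def by simp
    also have "\<dots> = 1 / ?N" 
      by (simp add: pFY_eq[OF f y] add_divide_distrib[symmetric])
    finally show ?thesis .
  qed
  have tm: "(if pFY \<alpha> n f b y = 0 then 0
       else pFY \<alpha> n f b y * log 2 (pFY \<alpha> n f b y / (pF \<alpha> n f b * pY \<alpha> n f y)))
      = (1 + real_of_int b * ?g y) / (2 * ?N) * log 2 (1 + real_of_int b * ?g y)"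
    if y: "y \<in> cube n" and b: "b \<in> {-1,1}" for b y
  proof -
    have "pFY \<alpha> n f b y / (pF \<alpha> n f b * pY \<alpha> n f y) = 1 + real_of_int b * ?g y"
      unfolding pFY_eq[OF f y b] pF[OF b] pY[OF y] by (simp add: field_simps)
    then show ?thesis unfolding pFY_eq[OF f y b] by auto
  qed
  have "MI_fY \<alpha> n f = (\<Sum>b\<in>{-1,1::int}. \<Sum>y\<in>cube n. (1 + real_of_int b * ?g y) / (2 * ?N) * log 2 (1 + real_of_int b * ?g y))"
    unfolding MI_fY_def by (intro sum.cong refl) (simp add: tm)
  also have "\<dots> = (\<Sum>y\<in>cube n. (1 - ?g y) / (2 * ?N) * log 2 (1 - ?g y) + (1 + ?g y) / (2 * ?N) * log 2 (1 + ?g y))"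
    by (simp add: sum.distrib)
  also have "\<dots> = (\<Sum>y\<in>cube n. FF (?g y) / (?N * (2 * ln 2)))"
    by (intro sum.cong refl) (simp add: FF_def log_def field_simps)
  also have "\<dots> = (\<Sum>y\<in>cube n. FF (?g y)) / (?N * (2 * ln 2))"
    by (simp add: sum_divide_distrib)
  finally show ?thesis .
qed



lemma sum_1_shift: "(\<Sum>k=1..n. h k) = (\<Sum>m<n. h (Suc m))"
  using sum.atLeast1_atMost_eq[of h n] by simp

theorem proposition3:
  fixes n t :: nat and \<alpha> :: real and f :: "int list \<Rightarrow> int"
  assumes "0 \<le> \<alpha>" and "\<alpha> \<le> 1/2"
    and "\<forall>x\<in>cube n. f x \<in> {-1, 1}"
    and "real (card {x\<in>cube n. f x = -1}) / 2 ^ n = 1/2"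
    and "t \<ge> 1"
    and "(1/2) * (1 - 1 / sqrt (2 * real t - 1)) \<le> \<alpha>"
  shows "MI_fY \<alpha> n f \<le>
    (\<Sum>k=1..t-1. log 2 (exp 1) / (2 * real k * (2 * real k - 1))
                  * (2 * real k - 1) ^ k * (1 - 2 * \<alpha>) ^ (2 * k))
    + (1 - (\<Sum>k=1..t-1. log 2 (exp 1) / (2 * real k * (2 * real k - 1))))
      * (2 * real t - 1) ^ t * (1 - 2 * \<alpha>) ^ (2 * t)"
proof -
  note f = assms(3) and card = assms(4)
  define r where "r = 1 - 2*\<alpha>"
  define F where "F = (\<lambda>x. real_of_int (f x))"
  define g where "g = Tf r n F"
  define T where "T = t - 1"
  define c where "c = (\<lambda>k::nat. real (2*k-1) * r^2)"
  define L where "L = ln (2::real)"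
  define R where "R = 2 * L - (\<Sum>m<T. beta m)"
  have L: "L > 0" unfolding L_def by simp
  have t: "T + 1 = t" unfolding T_def using assms(5) by simp
  have r0: "0 \<le> r" and r1: "r \<le> 1" using assms(1,2) unfolding r_def by auto
  have rt: "(2 * real t - 1) * r^2 \<le> 1"
  proof -
    define s where "s = 2 * real t - 1"
    have s: "s \<ge> 1" unfolding s_def using assms(5) by simp
    have "r \<le> 1 / sqrt s" using assms(6) unfolding r_def s_def by (simp add: field_simps)
    then have "r^2 \<le> (1 / sqrt s)^2" using r0 by (intro power_mono) simp_all
    also have "\<dots> = 1 / s" using s by (simp add: power_divide)
    finally have "r^2 \<le> 1 / s" .
    then have "s * r^2 \<le> s * (1/s)" using s by (intro mult_left_mono) simp_all
    then show ?thesis using s unfolding s_def by simp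
  qed
  have c: "0 \<le> c k \<and> c k \<le> 1" if "1 \<le> k" "k \<le> t" for k
  proof -
    have "real (2*k-1) = 2 * real k - 1" using that by (simp add: of_nat_diff)
    then have "c k = (2 * real k - 1) * r^2" unfolding c_def by simp
    moreover have "(2 * real k - 1) * r^2 \<le> (2 * real t - 1) * r^2"
      using that by (intro mult_right_mono) simp_all
    ultimately show ?thesis using rt that by (simp add: c_def)
  qed
  have M0: "Mn n F = 0" unfolding Mn_def F_def using sum_f_zero[OF f card] by simp
  have S1: "Sn n F = 1"
  proof -
    have "(\<Sum>x\<in>cube n. (F x)^2) = (\<Sum>x\<in>cube n. 1)"
      using f unfolding F_def by (intro sum.cong) auto
    then show ?thesis unfolding Sn_def by (simp add: card_cube)
  qed
  have Ek: "(\<Sum>y\<in>cube n. (g y)^(2*k)) \<le> 2^n * (c k)^k" if "1 \<le> k" "k \<le> t" for k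
    using hc[of k "c k" r n F] c[OF that] that unfolding g_def M0 S1 c_def by simp
  have gb: "\<bar>g y\<bar> \<le> 1" if y: "y \<in> cube n" for y
  proof -
    have "\<bar>g y\<bar> \<le> (\<Sum>x\<in>cube n. \<bar>kern r x y * F x\<bar>)" unfolding g_def Tf_def by (rule sum_abs)
    also have "\<dots> = (\<Sum>x\<in>cube n. kern r x y)"
    proof (intro sum.cong refl)
      fix x assume x: "x \<in> cube n"
      have "0 \<le> kern r x y" using kern_nonneg[OF r0 r1] cube_set[OF x] cube_set[OF y] by blast
      moreover have "\<bar>F x\<bar> = 1" using f x unfolding F_def by auto
      ultimately show "\<bar>kern r x y * F x\<bar> = kern r x y" by (simp add: abs_mult)
    qed
    also have "\<dots> = 1" using sum_kern1 cube_set[OF y] by blast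
    finally show ?thesis .
  qed
  have "MI_fY \<alpha> n f = (\<Sum>y\<in>cube n. FF (g y)) / (2^n * (2 * L))"
    using MI_eq[OF f card, of \<alpha>] unfolding g_def r_def F_def L_def by simp
  also have "\<dots> \<le> (\<Sum>y\<in>cube n. (\<Sum>m<T. beta m * ((g y)^2)^(m+1)) + R * ((g y)^2)^(T+1)) / (2^n * (2 * L))"
    using L FF_bound0[OF gb, of _ T] unfolding R_def L_def
    by (intro divide_right_mono sum_mono) auto
  also have "(\<Sum>y\<in>cube n. (\<Sum>m<T. beta m * ((g y)^2)^(m+1)) + R * ((g y)^2)^(T+1))
      = (\<Sum>m<T. beta m * (\<Sum>y\<in>cube n. (g y)^(2*Suc m))) + R * (\<Sum>y\<in>cube n. (g y)^(2*t))"
  proof -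
    have pw: "((g y)^2)^(m+1) = (g y)^(2*Suc m)" for y m by (simp only: power_mult Suc_eq_plus1)
    have pw2: "((g y)^2)^(T+1) = (g y)^(2*t)" for y unfolding t[symmetric] by (simp only: power_mult)
    show ?thesis unfolding pw2 pw
      by (simp add: sum.distrib sum_distrib_left t[symmetric] flip: sum.swap[of _ "cube n"])
  qed
  also have "\<dots> \<le> (\<Sum>m<T. beta m * (2^n * (c (Suc m))^(Suc m))) + R * (2^n * (c t)^t)"
  proof (intro add_mono sum_mono mult_left_mono)
    fix m assume "m \<in> {..<T}"
    then show "(\<Sum>y\<in>cube n. (g y)^(2*Suc m)) \<le> 2^n * (c (Suc m))^(Suc m)"
      using Ek[of "Suc m"] t by simp
  next
    show "(\<Sum>y\<in>cube n. (g y)^(2*t)) \<le> 2^n * (c t)^t" using Ek[of t] assms(5) by simp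
  next
    show "0 \<le> R" unfolding R_def L_def using sum_beta_le[of T] by simp
  qed (simp_all add: beta_nonneg)
  finally have main: "MI_fY \<alpha> n f \<le> ((\<Sum>m<T. beta m * (2^n * (c (Suc m))^(Suc m))) + R * (2^n * (c t)^t)) / (2^n * (2 * L))"
    using L by (simp add: divide_right_mono)
  have eq: "((\<Sum>m<T. beta m * (2^n * (c (Suc m))^(Suc m))) + R * (2^n * (c t)^t)) / (2^n * (2 * L)) =
    (\<Sum>k=1..t-1. log 2 (exp 1) / (2 * real k * (2 * real k - 1))
                  * (2 * real k - 1) ^ k * (1 - 2 * \<alpha>) ^ (2 * k))
    + (1 - (\<Sum>k=1..t-1. log 2 (exp 1) / (2 * real k * (2 * real k - 1))))
      * (2 * real t - 1) ^ t * (1 - 2 * \<alpha>) ^ (2 * t)"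
  proof -
    have lg: "log 2 (exp 1) = 1 / L" unfolding L_def log_def by simp
    have bt: "log 2 (exp 1) / (2 * real (Suc m) * (2 * real (Suc m) - 1)) = beta m / (2 * L)" for m
      unfolding lg beta_def by (simp add: field_simps)
    have cs: "(c (Suc m))^(Suc m) = (2 * real (Suc m) - 1) ^ Suc m * r ^ (2 * Suc m)" for m
    proof -
      have e: "real (2*Suc m - 1) = 2 * real (Suc m) - 1" by (simp add: of_nat_diff)
      have "(c (Suc m))^(Suc m) = (2 * real (Suc m) - 1) ^ Suc m * (r^2) ^ Suc m"
        unfolding c_def e by (rule power_mult_distrib)
      then show ?thesis by (simp only: power_mult)
    qed
    have ct: "(c t)^t = (2 * real t - 1) ^ t * r ^ (2 * t)"
    proof -
      have e: "real (2*t - 1) = 2 * real t - 1" using assms(5) by (simp add: of_nat_diff)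
      have "(c t)^t = (2 * real t - 1) ^ t * (r^2) ^ t"
        unfolding c_def e by (rule power_mult_distrib)
      then show ?thesis by (simp only: power_mult)
    qed
    have s1: "(\<Sum>k=1..t-1. log 2 (exp 1) / (2 * real k * (2 * real k - 1)) * (2 * real k - 1) ^ k * (1 - 2 * \<alpha>) ^ (2 * k))
        = (\<Sum>m<T. beta m * (c (Suc m))^(Suc m) / (2 * L))"
      unfolding sum_1_shift T_def[symmetric] bt cs r_def by (intro sum.cong refl) simp
    have s2: "(\<Sum>k=1..t-1. log 2 (exp 1) / (2 * real k * (2 * real k - 1))) = (\<Sum>m<T. beta m) / (2 * L)"
      unfolding sum_1_shift T_def[symmetric] bt by (simp add: sum_divide_distrib)
    have Rl: "R / (2 * L) = 1 - (\<Sum>m<T. beta m) / (2 * L)" unfolding R_def using L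
      by (simp add: diff_divide_distrib)
    have "((\<Sum>m<T. beta m * (2^n * (c (Suc m))^(Suc m))) + R * (2^n * (c t)^t)) / (2^n * (2 * L))
        = (\<Sum>m<T. beta m * (c (Suc m))^(Suc m) / (2 * L)) + R / (2 * L) * (c t)^t"
    proof -
      let ?X = "\<lambda>m. (c (Suc m))^(Suc m)"
      have a1: "(\<Sum>m<T. beta m * (2^n * ?X m)) = 2^n * (\<Sum>m<T. beta m * ?X m)"
        by (simp add: sum_distrib_left mult.left_commute)
      have a2: "(2^n * (\<Sum>m<T. beta m * ?X m) + R * (2^n * (c t)^t)) / (2^n * (2 * L))
          = ((\<Sum>m<T. beta m * ?X m) + R * (c t)^t) / (2 * L)"
      proof -
        have gen: "(N*A + R*(N*B))/(N*(2*L)) = (A+R*B)/(2*L)" if "N \<noteq> 0" for N A B :: real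
        proof -
          have "N*A + R*(N*B) = N*(A+R*B)" by (simp add: algebra_simps)
          then show ?thesis using that by simp
        qed
        show ?thesis by (rule gen) simp
      qed
      show ?thesis unfolding a1 a2
        by (simp add: add_divide_distrib sum_divide_distrib)
    qed
    then show ?thesis unfolding Rl s1 s2 ct r_def by (simp add: mult.assoc)
  qed
  show ?thesis using main unfolding eq .
qed

end
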